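(* Let $H$, $L$ be as in the context with $L\mid Z$, let $k$ be an integer with $1\le k\le L-1$, and let $\mathcal T_0=\{x\in[MZ): x\equiv 0\pmod L\}$. Then $(1,\mathcal T_0)$ is a feasible solution with layer distance $d(1,\mathcal T_0)\ge k$ if and only if for every $j\in[NZ)$: (i) $\mathcal N(v_j)\cap\mathcal N(v_{\pi^t(j)})=\emptyset$ for all $t\in[1,k)$, and (ii) $\big|\{x\in\bigcup_{t\in[k)}\mathcal N(v_{\pi^t(j)}): x\equiv 0\pmod L\}\big|\le 1$.
   Context: Notation: $[a,b)=\{a,\dots,b-1\}$, $[n)=[0,n)$. Let $M,N,Z$ be positive integers and let $H$ be a binary $MZ\times NZ$ matrix made of $M\times N$ blocks, each a $Z\times Z$ circulant; assume $H$ has no zero row and no two identical rows. For $j\in[NZ)$, $\mathcal N(v_j)=\{i\in[MZ):H[i][j]=1\}$. For an index $i$ (a row index in $[MZ)$ or a column index in $[NZ)$) and an integer $s$, $\pi^s(i)=Z\lfloor i/Z\rfloor+((i+s)\bmod Z)$; for a set $\mathcal T$ of row indices, $\pi^s(\mathcal T)=\{\pi^s(x):x\in\mathcal T\}$. For $\mathcal A\subseteq[MZ)$, $H_{\mathcal A}$ is the submatrix of rows indexed by $\mathcal A$; $\omega(A)$ is the maximum Hamming weight of a column of $A$ ($\omega$ of the empty matrix is $0$). Fix an integer $L>1$. A pair $(S,\mathcal T_0)$ ($S$ a positive integer, $\mathcal T_0\subseteq[MZ)$) is a feasible solution if, with $\mathcal T_l=\pi^{lS}(\mathcal T_0)$ for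 $l\in[L)$, the sets $\mathcal T_0,\dots,\mathcal T_{L-1}$ are pairwise disjoint with union $[MZ)$. The layer distance $d(S,\mathcal T_0)$ is the largest $l\in[L)$ such that the vertical stack of $H_{\mathcal T_0},\dots,H_{\mathcal T_{l-1}}$ has maximum column weight at most $1$. *)

theory Defs
  imports Main
begin

definition pi_shift :: "nat \<Rightarrow> nat \<Rightarrow> nat \<Rightarrow> nat" where
  "pi_shift Z s i = Z * (i div Z) + (i + s) mod Z"

text \<open>H (an MZ x NZ binary matrix, as a boolean function on indices) consists of
  Z x Z circulant blocks: shifting row and column by one inside their blocks preserves entries.\<close>
definition circulant_blocks :: "nat \<Rightarrow> nat \<Rightarrow> nat \<Rightarrow> (nat \<Rightarrow> nat \<Rightarrow> bool) \<Rightarrow> bool" where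
  "circulant_blocks M N Z H \<longleftrightarrow>
     (\<forall>i<M*Z. \<forall>j<N*Z. H (pi_shift Z 1 i) (pi_shift Z 1 j) = H i j)"

definition no_zero_row :: "nat \<Rightarrow> nat \<Rightarrow> nat \<Rightarrow> (nat \<Rightarrow> nat \<Rightarrow> bool) \<Rightarrow> bool" where
  "no_zero_row M N Z H \<longleftrightarrow> (\<forall>i<M*Z. \<exists>j<N*Z. H i j)"

definition no_identical_rows :: "nat \<Rightarrow> nat \<Rightarrow> nat \<Rightarrow> (nat \<Rightarrow> nat \<Rightarrow> bool) \<Rightarrow> bool" where
  "no_identical_rows M N Z H \<longleftrightarrow>
     (\<forall>i<M*Z. \<forall>i'<M*Z. i \<noteq> i' \<longrightarrow> (\<exists>j<N*Z. H i j \<noteq> H i' j))"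

definition nbr :: "nat \<Rightarrow> nat \<Rightarrow> (nat \<Rightarrow> nat \<Rightarrow> bool) \<Rightarrow> nat \<Rightarrow> nat set" where
  "nbr M Z H j = {i. i < M*Z \<and> H i j}"

definition layer :: "nat \<Rightarrow> nat \<Rightarrow> nat set \<Rightarrow> nat \<Rightarrow> nat set" where
  "layer Z S T0 l = pi_shift Z (l*S) ` T0"

definition feasible :: "nat \<Rightarrow> nat \<Rightarrow> nat \<Rightarrow> nat \<Rightarrow> nat set \<Rightarrow> bool" where
  "feasible M Z L S T0 \<longleftrightarrow>
     0 < S \<and> T0 \<subseteq> {..<M*Z} \<and>
     (\<forall>l1<L. \<forall>l2<L. l1 \<noteq> l2 \<longrightarrow> layer Z S T0 l1 \<inter> layer Z S T0 l2 = {}) \<and>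
     (\<Union>l<L. layer Z S T0 l) = {..<M*Z}"

text \<open>Weight of column j of the vertical stack of H_{T_0}, ..., H_{T_{l-1}}
  (rows of each H_{T_t} counted separately).\<close>
definition stack_col_weight ::
  "nat \<Rightarrow> (nat \<Rightarrow> nat \<Rightarrow> bool) \<Rightarrow> nat \<Rightarrow> nat set \<Rightarrow> nat \<Rightarrow> nat \<Rightarrow> nat" where
  "stack_col_weight Z H S T0 l j = (\<Sum>t<l. card {i \<in> layer Z S T0 t. H i j})"

definition stack_omega ::
  "nat \<Rightarrow> nat \<Rightarrow> (nat \<Rightarrow> nat \<Rightarrow> bool) \<Rightarrow> nat \<Rightarrow> nat set \<Rightarrow> nat \<Rightarrow> nat" where
  "stack_omega N Z H S T0 l =
     (if l = 0 then 0 else Max ((\<lambda>j. stack_col_weight Z H S T0 l j) ` {..<N*Z}))"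

definition layer_distance ::
  "nat \<Rightarrow> nat \<Rightarrow> nat \<Rightarrow> (nat \<Rightarrow> nat \<Rightarrow> bool) \<Rightarrow> nat \<Rightarrow> nat set \<Rightarrow> nat" where
  "layer_distance N Z L H S T0 = (GREATEST l. l < L \<and> stack_omega N Z H S T0 l \<le> 1)"

end

theory Submission imports Defs begin
lemma ps_comp: "0<Z \<Longrightarrow> pi_shift Z a (pi_shift Z b x) = pi_shift Z (a+b) x"
  unfolding pi_shift_def by (simp add: mod_add_left_eq add.commute[of a b] add.assoc)
lemma ps_zero: "0<Z \<Longrightarrow> n mod Z = 0 \<Longrightarrow> pi_shift Z n x = x"
  unfolding pi_shift_def by (simp add: mod_add_right_eq[symmetric])
lemma ps_mod: "L dvd Z \<Longrightarrow> 0<Z \<Longrightarrow> pi_shift Z s x mod L = (x+s) mod L"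
proof -
  assume a: "L dvd Z" "0<Z"
  have "L dvd Z*(x div Z)" using a(1) by simp
  then obtain c where c: "Z*(x div Z) = L*c" by blast
  have "(L*c + (x+s) mod Z) mod L = ((x+s) mod Z) mod L" by (simp add: add.commute)
  then have "(Z*(x div Z) + (x+s) mod Z) mod L = ((x+s) mod Z) mod L" using c by simp
  also have "\<dots> = (x+s) mod L" using a(1) by (rule mod_mod_cancel)
  finally show ?thesis unfolding pi_shift_def .
qed
lemma ps_lt: "0<Z \<Longrightarrow> x < n*Z \<Longrightarrow> pi_shift Z s x < n*Z"
proof -
  assume a: "0<Z" "x < n*Z"
  have "x div Z < n" using a by (simp add: div_less_iff_less_mult)
  hence "Suc (x div Z) \<le> n" by simp
  hence "Z * Suc (x div Z) \<le> n*Z" by (metis mult.commute mult_le_mono2)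
  moreover have "(x+s) mod Z < Z" using a by simp
  ultimately show ?thesis unfolding pi_shift_def by simp
qed
lemma ps_addZ: "0<Z \<Longrightarrow> pi_shift Z (Z + m) x = pi_shift Z m x"
  unfolding pi_shift_def by (metis add.commute add.left_commute mod_add_self2)
lemma ps_inj: "0<Z \<Longrightarrow> pi_shift Z s x = pi_shift Z s y \<Longrightarrow> x = y"
proof -
  assume a: "0<Z" "pi_shift Z s x = pi_shift Z s y"
  have "(Z - s mod Z + s) mod Z = 0" using a
    by (metis add.commute add_diff_inverse_nat mod_add_right_eq mod_less_divisor mod_self not_less_iff_gr_or_eq)
  then show ?thesis using a ps_comp[OF a(1), of "Z - s mod Z" s] ps_zero[OF a(1)] by metis
qed

lemma ps_H: assumes "0<Z" "circulant_blocks M N Z H" "i < M*Z" "j < N*Z"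
  shows "H (pi_shift Z s i) (pi_shift Z s j) = H i j"
proof (induction s)
  case 0 show ?case using ps_zero[OF assms(1)] by simp
next
  case (Suc s)
  have "pi_shift Z (Suc s) i = pi_shift Z 1 (pi_shift Z s i)" "pi_shift Z (Suc s) j = pi_shift Z 1 (pi_shift Z s j)"
    using ps_comp[OF assms(1), of 1 s] by auto
  moreover have "pi_shift Z s i < M*Z" "pi_shift Z s j < N*Z" using ps_lt assms by auto
  ultimately show ?case using Suc assms(2) unfolding circulant_blocks_def by simp
qed

lemma nbr_shift: assumes "0<Z" "circulant_blocks M N Z H" "j < N*Z" "i \<in> nbr M Z H j"
  shows "pi_shift Z s i \<in> nbr M Z H (pi_shift Z s j)"
  using assms ps_H[OF assms(1,2)] ps_lt[OF assms(1)] unfolding nbr_def by auto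

lemma layer_eq: assumes "0<Z" "L dvd Z" "l < L"
  shows "layer Z 1 {x. x < M*Z \<and> x mod L = 0} l = {y. y < M*Z \<and> y mod L = l}"
proof
  show "layer Z 1 {x. x < M*Z \<and> x mod L = 0} l \<subseteq> {y. y < M*Z \<and> y mod L = l}"
  proof
    fix y assume "y \<in> layer Z 1 {x. x < M*Z \<and> x mod L = 0} l"
    then obtain x where x: "x < M*Z" "x mod L = 0" "y = pi_shift Z l x" unfolding layer_def by auto
    have "y mod L = (x + l) mod L" using ps_mod assms x by simp
    also have "\<dots> = l" using x assms(3) by (simp add: mod_add_left_eq[symmetric])
    finally show "y \<in> {y. y < M*Z \<and> y mod L = l}" using x ps_lt[OF assms(1)] by simp
  qed
next
  show "{y. y < M*Z \<and> y mod L = l} \<subseteq> layer Z 1 {x. x < M*Z \<and> x mod L = 0} l"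
  proof
    fix y assume y: "y \<in> {y. y < M*Z \<and> y mod L = l}"
    obtain q where q: "Z = L*q" using assms(2) by blast
    have LZ: "L \<le> Z" using assms(1,2) by (simp add: dvd_imp_le)
    define x where "x = pi_shift Z (Z - l) y"
    have "pi_shift Z l x = pi_shift Z (l + (Z - l)) y" unfolding x_def using ps_comp assms by simp
    also have "\<dots> = y" using ps_zero[OF assms(1)] LZ assms(3) by simp
    finally have e: "pi_shift Z l x = y" .
    have yy: "y = L*(y div L) + l" using y div_mult_mod_eq[of y L] by (simp add: mult.commute)
    have "y + (Z - l) = (y - l) + Z" using yy LZ assms(3) by arith
    also have "\<dots> = L*(y div L + q)" using yy q by (simp add: algebra_simps)
    finally have "y + (Z - l) = L*(y div L + q)" .
    hence "x mod L = 0" unfolding x_def using ps_mod[OF assms(2,1)] by simp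
    moreover have "x < M*Z" unfolding x_def using ps_lt[OF assms(1)] y by simp
    ultimately show "y \<in> layer Z 1 {x. x < M*Z \<and> x mod L = 0} l" unfolding layer_def using e by force
  qed
qed

lemma weight_eq: assumes "0<Z" "L dvd Z" "l \<le> L"
  shows "stack_col_weight Z H 1 {x. x < M*Z \<and> x mod L = 0} l j = card {i. i < M*Z \<and> H i j \<and> i mod L < l}"
  using assms(3)
proof (induction l)
  case 0 then show ?case unfolding stack_col_weight_def by simp
next
  case (Suc l)
  have lay: "layer Z 1 {x. x < M*Z \<and> x mod L = 0} l = {y. y < M*Z \<and> y mod L = l}"
    using layer_eq[OF assms(1,2), of l M] Suc.prems by simp
  have e: "{i. i < M*Z \<and> H i j \<and> i mod L < Suc l} = {i. i < M*Z \<and> H i j \<and> i mod L < l} \<union> {i \<in> layer Z 1 {x. x < M*Z \<and> x mod L = 0} l. H i j}"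
    unfolding lay less_Suc_eq by blast
  have "card ({i. i < M*Z \<and> H i j \<and> i mod L < l} \<union> {i \<in> layer Z 1 {x. x < M*Z \<and> x mod L = 0} l. H i j}) = card {i. i < M*Z \<and> H i j \<and> i mod L < l} + card {i \<in> layer Z 1 {x. x < M*Z \<and> x mod L = 0} l. H i j}"
    unfolding lay by (rule card_Un_disjoint) auto
  hence "card {i. i < M*Z \<and> H i j \<and> i mod L < Suc l} = card {i. i < M*Z \<and> H i j \<and> i mod L < l} + card {i \<in> layer Z 1 {x. x < M*Z \<and> x mod L = 0} l. H i j}"
    unfolding e .
  moreover have "stack_col_weight Z H 1 {x. x < M*Z \<and> x mod L = 0} (Suc l) j = stack_col_weight Z H 1 {x. x < M*Z \<and> x mod L = 0} l j + card {i \<in> layer Z 1 {x. x < M*Z \<and> x mod L = 0} l. H i j}"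
    unfolding stack_col_weight_def by simp
  moreover have "stack_col_weight Z H 1 {x. x < M*Z \<and> x mod L = 0} l j = card {i. i < M*Z \<and> H i j \<and> i mod L < l}"
    using Suc by simp
  ultimately show ?case by simp
qed

lemma omega_eq: assumes "0<Z" "L dvd Z" "0 < l" "l \<le> L" "0 < N"
  shows "stack_omega N Z H 1 {x. x < M*Z \<and> x mod L = 0} l \<le> 1 \<longleftrightarrow>
     (\<forall>j<N*Z. card {i. i < M*Z \<and> H i j \<and> i mod L < l} \<le> 1)"
proof -
  have "0 \<in> {..<N*Z}" using assms by simp
  hence ne: "{..<N*Z} \<noteq> {}" by blast
  show ?thesis unfolding stack_omega_def using assms(3) weight_eq[OF assms(1,2,4)]
    using ne by (auto simp add: Max_le_iff)
qed

theorem lemma4: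
  fixes M N Z L k :: nat and H :: "nat \<Rightarrow> nat \<Rightarrow> bool"
  assumes "0 < M" and "0 < N" and "0 < Z"
    and "circulant_blocks M N Z H"
    and "no_zero_row M N Z H"
    and "no_identical_rows M N Z H"
    and "1 < L" and "L dvd Z"
    and "1 \<le> k" and "k \<le> L - 1"
  shows "(feasible M Z L 1 {x. x < M*Z \<and> x mod L = 0} \<and>
          k \<le> layer_distance N Z L H 1 {x. x < M*Z \<and> x mod L = 0})
     \<longleftrightarrow> (\<forall>j<N*Z.
            (\<forall>t\<in>{1..<k}. nbr M Z H j \<inter> nbr M Z H (pi_shift Z t j) = {}) \<and>
            card {x \<in> (\<Union>t<k. nbr M Z H (pi_shift Z t j)). x mod L = 0} \<le> 1)"
proof -
  note Z = assms(3)
  note circ = assms(4)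
  define T0 where "T0 = {x. x < M*Z \<and> x mod L = 0}"
  define W where "W j = {i. i < M*Z \<and> H i j \<and> i mod L < k}" for j
  define p where "p s x = pi_shift Z s x" for s x
  have LZ: "L \<le> Z" using assms by (simp add: dvd_imp_le)
  have kL: "k < L" using assms by simp
  have feas: "feasible M Z L 1 T0"
  proof -
    have lay: "\<And>l. l < L \<Longrightarrow> layer Z 1 T0 l = {y. y < M*Z \<and> y mod L = l}"
      unfolding T0_def using layer_eq[OF Z assms(8)] by blast
    have "(\<Union>l<L. layer Z 1 T0 l) = {..<M*Z}"
    proof
      show "(\<Union>l<L. layer Z 1 T0 l) \<subseteq> {..<M*Z}" using lay by auto
      show "{..<M*Z} \<subseteq> (\<Union>l<L. layer Z 1 T0 l)"
      proof
        fix y assume "y \<in> {..<M*Z}"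
        moreover have "y mod L < L" using assms(7) by simp
        ultimately show "y \<in> (\<Union>l<L. layer Z 1 T0 l)" using lay[of "y mod L"] by blast
      qed
    qed
    moreover have "\<forall>l1<L. \<forall>l2<L. l1 \<noteq> l2 \<longrightarrow> layer Z 1 T0 l1 \<inter> layer Z 1 T0 l2 = {}"
      using lay by auto
    ultimately show ?thesis unfolding feasible_def T0_def by auto
  qed
  have OM: "stack_omega N Z H 1 T0 l \<le> 1 \<longleftrightarrow> (\<forall>j<N*Z. card {i. i < M*Z \<and> H i j \<and> i mod L < l} \<le> 1)"
    if "0 < l" "l \<le> L" for l
    unfolding T0_def using omega_eq[OF Z assms(8) that assms(2)] .
  have LD: "k \<le> layer_distance N Z L H 1 T0 \<longleftrightarrow> (\<forall>j<N*Z. card (W j) \<le> 1)"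
  proof
    assume a: "\<forall>j<N*Z. card (W j) \<le> 1"
    have "stack_omega N Z H 1 T0 k \<le> 1" using OM[of k] a assms kL unfolding W_def by simp
    then show "k \<le> layer_distance N Z L H 1 T0" unfolding layer_distance_def
      using kL by (intro Greatest_le_nat[where b=L]) auto
  next
    assume a: "k \<le> layer_distance N Z L H 1 T0"
    define g where "g = layer_distance N Z L H 1 T0"
    have "g < L \<and> stack_omega N Z H 1 T0 g \<le> 1" unfolding g_def layer_distance_def
      by (rule GreatestI_nat[where k=0 and b=L]) (use assms in \<open>auto simp: stack_omega_def\<close>)
    hence g: "\<forall>j<N*Z. card {i. i < M*Z \<and> H i j \<and> i mod L < g} \<le> 1"
      using OM[of g] a assms unfolding g_def by auto
    show "\<forall>j<N*Z. card (W j) \<le> 1"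
    proof (intro allI impI)
      fix j assume j: "j < N*Z"
      have "card (W j) \<le> card {i. i < M*Z \<and> H i j \<and> i mod L < g}"
        unfolding W_def using a g_def by (intro card_mono) auto
      then show "card (W j) \<le> 1" using g j by fastforce
    qed
  qed
  have fin: "finite (W j)" for j unfolding W_def by auto
  have Wc: "(\<forall>j<N*Z. card (W j) \<le> 1) \<longleftrightarrow> (\<forall>j<N*Z. \<forall>a\<in>W j. \<forall>b\<in>W j. a = b)"
    using card_le_Suc0_iff_eq[OF fin] by simp
  have lt: "\<And>s x. x < N*Z \<Longrightarrow> pi_shift Z s x < N*Z" using ps_lt[OF Z] by blast
  have comp: "\<And>a b x. pi_shift Z a (pi_shift Z b x) = pi_shift Z (a+b) x" using ps_comp[OF Z] by blast
  have md: "\<And>s x. pi_shift Z s x mod L = (x + s) mod L" using ps_mod[OF assms(8) Z] by blast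
  have nbrlt: "\<And>x c. x \<in> nbr M Z H c \<Longrightarrow> x < M*Z" unfolding nbr_def by simp
  have inW: "\<And>x c. x \<in> nbr M Z H c \<Longrightarrow> x mod L < k \<Longrightarrow> x \<in> W c" unfolding W_def nbr_def by simp
  have Wn: "\<And>x c. x \<in> W c \<Longrightarrow> x \<in> nbr M Z H c \<and> x mod L < k" unfolding W_def nbr_def by simp
  have ns: "\<And>s i c. c < N*Z \<Longrightarrow> i \<in> nbr M Z H c \<Longrightarrow> pi_shift Z s i \<in> nbr M Z H (pi_shift Z s c)"
    using nbr_shift[OF Z circ] by blast
  obtain q where q: "Z = L*q" using assms(8) by blast
  have main: "(\<forall>j<N*Z. \<forall>a\<in>W j. \<forall>b\<in>W j. a = b) \<longleftrightarrow> (\<forall>j<N*Z.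
            (\<forall>t\<in>{1..<k}. nbr M Z H j \<inter> nbr M Z H (pi_shift Z t j) = {}) \<and>
            card {x \<in> (\<Union>t<k. nbr M Z H (pi_shift Z t j)). x mod L = 0} \<le> 1)"
  proof
    assume A: "\<forall>j<N*Z. \<forall>a\<in>W j. \<forall>b\<in>W j. a = b"
    show "\<forall>j<N*Z.
            (\<forall>t\<in>{1..<k}. nbr M Z H j \<inter> nbr M Z H (pi_shift Z t j) = {}) \<and>
            card {x \<in> (\<Union>t<k. nbr M Z H (pi_shift Z t j)). x mod L = 0} \<le> 1"
    proof (intro allI impI conjI ballI)
      fix j assume j: "j < N*Z"
      {
        fix t assume t: "t \<in> {1..<k}"
        show "nbr M Z H j \<inter> nbr M Z H (pi_shift Z t j) = {}"
        proof (rule ccontr)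
          assume "nbr M Z H j \<inter> nbr M Z H (pi_shift Z t j) \<noteq> {}"
          then obtain i where i1: "i \<in> nbr M Z H j" and i2: "i \<in> nbr M Z H (pi_shift Z t j)" by blast
          have tZ: "t < Z" using t kL LZ by simp
          have "pi_shift Z (Z-t) i \<in> nbr M Z H (pi_shift Z (Z-t) (pi_shift Z t j))"
            using ns[OF lt[OF j] i2] .
          also have "pi_shift Z (Z-t) (pi_shift Z t j) = j" using comp ps_zero[OF Z] tZ by simp
          finally have i3: "pi_shift Z (Z-t) i \<in> nbr M Z H j" .
          define r where "r = i mod L"
          define s where "s = L - r + t"
          have rL: "r < L" unfolding r_def using assms(7) by simp
          have ii: "i = L*(i div L) + r" unfolding r_def by simp
          have "i + (Z - t) + s = L*(i div L + q + 1)" unfolding s_def using ii q tZ rL by (simp add: algebra_simps)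
          moreover have "pi_shift Z s (pi_shift Z (Z-t) i) mod L = (i + (Z - t) + s) mod L"
            using md[of s] md[of "Z-t" i] by (metis mod_add_left_eq)
          ultimately have ma: "pi_shift Z s (pi_shift Z (Z-t) i) mod L = 0" by simp
          have "i + s = L*(i div L + 1) + t" unfolding s_def using ii rL by (simp add: algebra_simps)
          moreover have "(L*(i div L + 1) + t) mod L = t" using t kL by (metis mod_mult_self3 mod_less atLeastLessThan_iff less_trans mult.commute)
          ultimately have mb: "pi_shift Z s i mod L = t" using md[of s i] by simp
          have a: "pi_shift Z s (pi_shift Z (Z-t) i) \<in> W (pi_shift Z s j)"
            using inW[OF ns[OF j i3]] ma assms by simp
          have b: "pi_shift Z s i \<in> W (pi_shift Z s j)"
            using inW[OF ns[OF j i1]] mb t by simp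
          have "pi_shift Z s (pi_shift Z (Z-t) i) = pi_shift Z s i" using A lt[OF j] a b by blast
          then show False using ma mb t by simp
        qed
      }
      define X where "X = {x \<in> (\<Union>t<k. nbr M Z H (pi_shift Z t j)). x mod L = 0}"
      have "X \<subseteq> {..<M*Z}" unfolding X_def using nbrlt by blast
      hence finX: "finite X" using finite_subset by blast
      have key: "x1 = x2" if "t1 \<le> t2" "t2 < k" "x1 \<in> nbr M Z H (pi_shift Z t1 j)"
        "x2 \<in> nbr M Z H (pi_shift Z t2 j)" "x1 mod L = 0" "x2 mod L = 0" for t1 t2 x1 x2
      proof -
        have "pi_shift Z (t2-t1) x1 \<in> nbr M Z H (pi_shift Z (t2-t1) (pi_shift Z t1 j))"
          using ns[OF lt[OF j] that(3)] .
        also have "pi_shift Z (t2-t1) (pi_shift Z t1 j) = pi_shift Z t2 j" using comp that(1) by simp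
        finally have y: "pi_shift Z (t2-t1) x1 \<in> nbr M Z H (pi_shift Z t2 j)" .
        have "(x1 + (t2 - t1)) mod L = (x1 mod L + (t2 - t1)) mod L" by (simp add: mod_add_left_eq)
        also have "\<dots> = t2 - t1" using that(2,5) kL by simp
        finally have ym: "pi_shift Z (t2-t1) x1 mod L = t2 - t1" using md[of "t2-t1" x1] by simp
        have w1: "pi_shift Z (t2-t1) x1 \<in> W (pi_shift Z t2 j)" using inW[OF y] ym that(2) by simp
        have w2: "x2 \<in> W (pi_shift Z t2 j)" using inW[OF that(4)] that(6) that(2) by simp
        have "pi_shift Z (t2-t1) x1 = x2" using A[rule_format, OF lt[OF j] w1 w2] .
        hence "t2 - t1 = 0" using ym that(6) by simp
        thus ?thesis using \<open>pi_shift Z (t2-t1) x1 = x2\<close> ps_zero[OF Z] by simp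
      qed
      have "\<forall>a\<in>X. \<forall>b\<in>X. a = b"
      proof (intro ballI)
        fix a b assume a: "a \<in> X" and b: "b \<in> X"
        then obtain ta tb where "ta < k" "a \<in> nbr M Z H (pi_shift Z ta j)" "tb < k" "b \<in> nbr M Z H (pi_shift Z tb j)"
          "a mod L = 0" "b mod L = 0" unfolding X_def by auto
        then show "a = b" using key[of ta tb a b] key[of tb ta b a] by (cases "ta \<le> tb") auto
      qed
      then show "card X \<le> 1" using card_le_Suc0_iff_eq[OF finX] by simp
    qed
  next
    assume R: "\<forall>j<N*Z.
            (\<forall>t\<in>{1..<k}. nbr M Z H j \<inter> nbr M Z H (pi_shift Z t j) = {}) \<and>
            card {x \<in> (\<Union>t<k. nbr M Z H (pi_shift Z t j)). x mod L = 0} \<le> 1"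
    show "\<forall>j<N*Z. \<forall>a\<in>W j. \<forall>b\<in>W j. a = b"
    proof (intro allI impI ballI)
      fix j' i1 i2 assume j': "j' < N*Z" and i1: "i1 \<in> W j'" and i2: "i2 \<in> W j'"
      define j where "j = pi_shift Z (Z-(k-1)) j'"
      have j: "j < N*Z" unfolding j_def using lt[OF j'] .
      have jj: "pi_shift Z (k-1) j = j'" unfolding j_def using comp ps_zero[OF Z] kL LZ by simp
      have C: "pi_shift Z (Z - i mod L) i \<in> nbr M Z H (pi_shift Z (k-1-i mod L) j) \<and> pi_shift Z (Z - i mod L) i mod L = 0"
        if i: "i \<in> W j'" for i
      proof
        define u where "u = i mod L"
        have uk: "u < k" using Wn[OF i] u_def by simp
        have "pi_shift Z (Z-u) i \<in> nbr M Z H (pi_shift Z (Z-u) j')" using ns[OF j'] Wn[OF i] by blast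
        also have "pi_shift Z (Z-u) j' = pi_shift Z (Z + (k-1-u)) j"
          using comp[of "Z-u" "k-1" j] jj uk kL LZ by (simp add: algebra_simps)
        also have "\<dots> = pi_shift Z (k-1-u) j" using ps_addZ[OF Z] by simp
        finally show "pi_shift Z (Z - i mod L) i \<in> nbr M Z H (pi_shift Z (k-1-i mod L) j)" unfolding u_def .
        have ii: "i = L*(i div L) + u" unfolding u_def by simp
        have "i + (Z - u) = (i - u) + Z" using ii uk kL LZ by arith
        also have "\<dots> = L*(i div L + q)" using ii q by (simp add: algebra_simps)
        finally have "i + (Z - u) = L*(i div L + q)" .
        thus "pi_shift Z (Z - i mod L) i mod L = 0" using md u_def by simp
      qed
      define X where "X = {x \<in> (\<Union>t<k. nbr M Z H (pi_shift Z t j)). x mod L = 0}"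
      have "X \<subseteq> {..<M*Z}" unfolding X_def using nbrlt by blast
      hence finX: "finite X" using finite_subset by blast
      have "card X \<le> 1" using R[rule_format, OF j] unfolding X_def by (rule conjunct2)
      hence X1: "\<forall>a\<in>X. \<forall>b\<in>X. a = b" using card_le_Suc0_iff_eq[OF finX] by simp
      have inX: "pi_shift Z (Z - i mod L) i \<in> X" if "i \<in> W j'" for i
      proof -
        have "k-1-i mod L < k" using assms(9) by simp
        then show ?thesis unfolding X_def using C[OF that] by blast
      qed
      have eq: "pi_shift Z (Z - i1 mod L) i1 = pi_shift Z (Z - i2 mod L) i2" using X1 inX i1 i2 by blast
      have noc: False if "a < b" "b < k" "x \<in> nbr M Z H (pi_shift Z a j)" "x \<in> nbr M Z H (pi_shift Z b j)" for a b x
      proof -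
        have c: "pi_shift Z a j < N*Z" using lt[OF j] .
        have "pi_shift Z (b-a) (pi_shift Z a j) = pi_shift Z b j" using comp that(1) by simp
        moreover have "b - a \<in> {1..<k}" using that by auto
        ultimately have "nbr M Z H (pi_shift Z a j) \<inter> nbr M Z H (pi_shift Z b j) = {}"
          using bspec[OF conjunct1[OF R[rule_format, OF c]]] by metis
        then show False using that(3,4) by blast
      qed
      have u1: "i1 mod L < k" and u2: "i2 mod L < k" using Wn i1 i2 by auto
      show "i1 = i2"
      proof (cases "i1 mod L = i2 mod L")
        case True then show ?thesis using eq ps_inj[OF Z, of "Z - i1 mod L" i1 i2] by simp
      next
        case False
        define x where "x = pi_shift Z (Z - i1 mod L) i1"
        have x1: "x \<in> nbr M Z H (pi_shift Z (k-1-i1 mod L) j)" using C[OF i1] x_def by simp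
        have x2: "x \<in> nbr M Z H (pi_shift Z (k-1-i2 mod L) j)" using C[OF i2] x_def eq by simp
        show ?thesis
        proof (cases "i1 mod L < i2 mod L")
          case True
          have "k-1-i2 mod L < k-1-i1 mod L" "k-1-i1 mod L < k" using True u1 u2 by arith+
          then show ?thesis using noc x1 x2 by blast
        next
          case F2: False
          have "k-1-i1 mod L < k-1-i2 mod L" "k-1-i2 mod L < k" using False F2 u1 u2 by arith+
          then show ?thesis using noc x1 x2 by blast
        qed
      qed
    qed
  qed
  have E: "(k \<le> layer_distance N Z L H 1 T0) = (\<forall>j<N*Z.
            (\<forall>t\<in>{1..<k}. nbr M Z H j \<inter> nbr M Z H (pi_shift Z t j) = {}) \<and>
            card {x \<in> (\<Union>t<k. nbr M Z H (pi_shift Z t j)). x mod L = 0} \<le> 1)"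
    by (simp only: LD Wc main)
  show ?thesis unfolding T0_def[symmetric] by (simp only: E feas simp_thms)
qed

end
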